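(* Let $x_1,\ldots,x_m,y_1,\ldots,y_n$ be elements of a nilpotent group $\Gamma$, regarded as $m+n$ distinct letters. Then there is a finite list $\eta_1,\ldots,\eta_r$ of formal commutators in the $x_i$ and $y_j$ such that: (i) in $\Gamma$, $[x_1\cdots x_m,y_1\cdots y_n]=\eta_1\cdots\eta_r$; (ii) for each pair $(i,i')$ some $\eta_j$ equals $[x_i,y_{i'}]$; (iii) every $\eta_j$ has at least one $x_i$ and at least one $y_{i'}$ among its arguments; (iv) the $\eta_j$ are pairwise distinct as formal commutators in the $x_i,y_{i'}$; (v) no $\eta_j$ has a component of the form $[x_i,x_{i'}]$ or $[y_i,y_{i'}]$; (vi) if $\eta_j$ is not of the form $[x_i,y_{i'}]$ then $\eta_j$ has total weight greater than 2.
   Context: $[u,v]=u^{-1}v^{-1}uv$. Formal commutators in letters: each letter is one, and $[\beta,\beta']$ is one whenever $\beta,\beta'$ are; they are interpreted in the group in the obvious way. The arguments of a formal commutator are the letters occurring in it; its total weight is the number of letter occurrences. Components: $C(x)=\{x\}$ for a letter and $C([\beta,\beta'])=C(\beta)\cup C(\beta')\cup\{[\beta,\beta']\}$. *)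

theory Defs
  imports "HOL-Algebra.Algebra"
begin

definition gcomm :: "('a, 'b) monoid_scheme \<Rightarrow> 'a \<Rightarrow> 'a \<Rightarrow> 'a" where
  "gcomm G u v = inv\<^bsub>G\<^esub> u \<otimes>\<^bsub>G\<^esub> inv\<^bsub>G\<^esub> v \<otimes>\<^bsub>G\<^esub> u \<otimes>\<^bsub>G\<^esub> v"

text \<open>Lower central series: gamma_1 = G, gamma_(k+1) = [G, gamma_k].\<close>
fun lower_central :: "('a, 'b) monoid_scheme \<Rightarrow> nat \<Rightarrow> 'a set" where
  "lower_central G 0 = carrier G"
| "lower_central G (Suc k) =
     generate G {gcomm G g h | g h. g \<in> carrier G \<and> h \<in> lower_central G k}"

definition nilpotent_group :: "('a, 'b) monoid_scheme \<Rightarrow> bool" where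
  "nilpotent_group G \<longleftrightarrow> group G \<and> (\<exists>c. lower_central G c = {\<one>\<^bsub>G\<^esub>})"

definition glist_prod :: "('a, 'b) monoid_scheme \<Rightarrow> 'a list \<Rightarrow> 'a" where
  "glist_prod G xs = foldr (\<lambda>a b. a \<otimes>\<^bsub>G\<^esub> b) xs \<one>\<^bsub>G\<^esub>"

text \<open>Letters: XL i stands for x_i, YL j for y_j (0-based indices).\<close>
datatype letter = XL nat | YL nat

datatype 'l fcomm = Ltr 'l | Comm "'l fcomm" "'l fcomm"

fun fc_args :: "'l fcomm \<Rightarrow> 'l set" where
  "fc_args (Ltr a) = {a}"
| "fc_args (Comm b c) = fc_args b \<union> fc_args c"

fun fc_weight :: "'l fcomm \<Rightarrow> nat" where
  "fc_weight (Ltr a) = 1"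
| "fc_weight (Comm b c) = fc_weight b + fc_weight c"

fun fc_components :: "'l fcomm \<Rightarrow> 'l fcomm set" where
  "fc_components (Ltr a) = {Ltr a}"
| "fc_components (Comm b c) = fc_components b \<union> fc_components c \<union> {Comm b c}"

fun fc_eval :: "('a, 'b) monoid_scheme \<Rightarrow> ('l \<Rightarrow> 'a) \<Rightarrow> 'l fcomm \<Rightarrow> 'a" where
  "fc_eval G v (Ltr a) = v a"
| "fc_eval G v (Comm b c) = gcomm G (fc_eval G v b) (fc_eval G v c)"

fun xy_val :: "(nat \<Rightarrow> 'a) \<Rightarrow> (nat \<Rightarrow> 'a) \<Rightarrow> letter \<Rightarrow> 'a" where
  "xy_val x y (XL i) = x i"
| "xy_val x y (YL j) = y j"

definition xy_letters :: "nat \<Rightarrow> nat \<Rightarrow> letter set" where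
  "xy_letters m n = XL ` {..<m} \<union> YL ` {..<n}"

end

theory Submission
  imports Defs
begin

definition lnorm :: "'l fcomm \<Rightarrow> 'l list \<Rightarrow> 'l fcomm" where
  "lnorm e ws = foldl (\<lambda>a z. Comm a (Ltr z)) e ws"

lemma lnorm_Nil[simp]: "lnorm e [] = e" by (simp add: lnorm_def)
lemma lnorm_snoc[simp]: "lnorm e (ws @ [z]) = Comm (lnorm e ws) (Ltr z)"
  by (simp add: lnorm_def)

definition stepP :: "'l \<Rightarrow> ('l fcomm \<times> 'l list) list \<Rightarrow> ('l fcomm \<times> 'l list) list" where
  "stepP z ps = concat (map (\<lambda>(e,ws). [(e,ws),(e,ws@[z])]) ps)"

lemma stepP_Nil[simp]: "stepP z [] = []" by (simp add: stepP_def)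
lemma stepP_Cons[simp]: "stepP z ((e,ws)#ps) = (e,ws) # (e,ws@[z]) # stepP z ps"
  by (simp add: stepP_def)

fun conjPL :: "'l list \<Rightarrow> ('l fcomm \<times> 'l list) list \<Rightarrow> ('l fcomm \<times> 'l list) list" where
  "conjPL [] ps = ps"
| "conjPL (z#zs) ps = conjPL zs (stepP z ps)"

fun CL :: "'l fcomm \<Rightarrow> 'l list \<Rightarrow> ('l fcomm \<times> 'l list) list" where
  "CL a [] = []"
| "CL a (y#ys) = CL a ys @ conjPL ys [(Comm a (Ltr y), [])]"

fun DL :: "'l list \<Rightarrow> 'l list \<Rightarrow> ('l fcomm \<times> 'l list) list" where
  "DL [] ys = []"
| "DL (x#xs) ys = conjPL xs (CL (Ltr x) ys) @ DL xs ys"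

definition evP :: "('a, 'b) monoid_scheme \<Rightarrow> ('l \<Rightarrow> 'a) \<Rightarrow> ('l fcomm \<times> 'l list) \<Rightarrow> 'a" where
  "evP G v p = fc_eval G v (lnorm (fst p) (snd p))"

context group
begin

lemma canc1: "x \<in> carrier G \<Longrightarrow> y \<in> carrier G \<Longrightarrow> x \<otimes> (inv x \<otimes> y) = y"
  by (simp add: m_assoc[symmetric])
lemma canc2: "x \<in> carrier G \<Longrightarrow> y \<in> carrier G \<Longrightarrow> inv x \<otimes> (x \<otimes> y) = y"
  by (simp add: m_assoc[symmetric])

lemma gcomm_closed[simp]: "a \<in> carrier G \<Longrightarrow> b \<in> carrier G \<Longrightarrow> gcomm G a b \<in> carrier G"
  by (simp add: gcomm_def)

lemma fc_eval_closed: "range v \<subseteq> carrier G \<Longrightarrow> fc_eval G v e \<in> carrier G"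
  by (induction e) (auto simp: gcomm_def)

lemma evP_closed: "range v \<subseteq> carrier G \<Longrightarrow> evP G v p \<in> carrier G"
  by (simp add: evP_def fc_eval_closed)

lemma gl_closed: "set xs \<subseteq> carrier G \<Longrightarrow> glist_prod G xs \<in> carrier G"
  by (induction xs) (auto simp: glist_prod_def)

lemma gl_map_closed: "range f \<subseteq> carrier G \<Longrightarrow> glist_prod G (map f xs) \<in> carrier G"
  by (rule gl_closed) auto

lemma evP_range: "range v \<subseteq> carrier G \<Longrightarrow> range (evP G v) \<subseteq> carrier G"
  using evP_closed by blast

lemma gl_Cons: "glist_prod G (a#xs) = a \<otimes> glist_prod G xs"
  by (simp add: glist_prod_def)

lemma gl_append: "set xs \<subseteq> carrier G \<Longrightarrow> set ys \<subseteq> carrier G \<Longrightarrow>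
   glist_prod G (xs @ ys) = glist_prod G xs \<otimes> glist_prod G ys"
  by (induction xs) (auto simp: glist_prod_def m_assoc gl_closed[unfolded glist_prod_def])

lemma comm_right: "a \<in> carrier G \<Longrightarrow> b \<in> carrier G \<Longrightarrow> c \<in> carrier G \<Longrightarrow>
   gcomm G a (b \<otimes> c) = gcomm G a c \<otimes> (inv c \<otimes> gcomm G a b \<otimes> c)"
  by (simp add: gcomm_def m_assoc inv_mult_group canc1 canc2)

lemma comm_left: "a \<in> carrier G \<Longrightarrow> b \<in> carrier G \<Longrightarrow> c \<in> carrier G \<Longrightarrow>
   gcomm G (a \<otimes> b) c = (inv b \<otimes> gcomm G a c \<otimes> b) \<otimes> gcomm G b c"
  by (simp add: gcomm_def m_assoc inv_mult_group canc1 canc2)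

lemma prod_step: assumes v: "range v \<subseteq> carrier G"
  shows "glist_prod G (map (evP G v) (stepP z ps)) = inv (v z) \<otimes> glist_prod G (map (evP G v) ps) \<otimes> v z"
proof (induction ps)
  case Nil
  have "v z \<in> carrier G" using v by auto
  then show ?case by (simp add: glist_prod_def)
next
  case (Cons p ps)
  obtain e ws where p: "p = (e,ws)" by fastforce
  have z: "v z \<in> carrier G" using v by auto
  have u: "evP G v (e,ws) \<in> carrier G" using evP_closed v by blast
  have R: "glist_prod G (map (evP G v) ps) \<in> carrier G" using gl_map_closed[OF evP_range[OF v]] by blast
  have e2: "evP G v (e, ws@[z]) = gcomm G (evP G v (e,ws)) (v z)"
    by (simp add: evP_def)
  show ?case using Cons z u R
    by (simp add: p gl_Cons e2 gcomm_def m_assoc canc1 canc2)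
qed

lemma prod_conjPL: assumes v: "range v \<subseteq> carrier G"
  shows "glist_prod G (map (evP G v) (conjPL zs ps)) =
     inv (glist_prod G (map v zs)) \<otimes> glist_prod G (map (evP G v) ps) \<otimes> glist_prod G (map v zs)"
proof (induction zs arbitrary: ps)
  case Nil
  have R: "glist_prod G (map (evP G v) ps) \<in> carrier G" using gl_map_closed[OF evP_range[OF v]] by blast
  then show ?case by (simp add: glist_prod_def)
next
  case (Cons z zs)
  have z: "v z \<in> carrier G" using v by auto
  have R: "glist_prod G (map (evP G v) ps) \<in> carrier G" using gl_map_closed[OF evP_range[OF v]] by blast
  have Z: "glist_prod G (map v zs) \<in> carrier G" using gl_map_closed[OF v] by blast
  show ?case using z R Z
    by (simp add: Cons prod_step[OF v] gl_Cons inv_mult_group m_assoc)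
qed

lemma prod_CL: assumes v: "range v \<subseteq> carrier G"
  shows "glist_prod G (map (evP G v) (CL a ys)) = gcomm G (fc_eval G v a) (glist_prod G (map v ys))"
proof (induction ys)
  case Nil
  have "fc_eval G v a \<in> carrier G" using fc_eval_closed v by blast
  then show ?case by (simp add: glist_prod_def gcomm_def m_assoc)
next
  case (Cons y ys)
  have y: "v y \<in> carrier G" using v by auto
  have A: "fc_eval G v a \<in> carrier G" using fc_eval_closed v by blast
  have Y: "glist_prod G (map v ys) \<in> carrier G" using gl_map_closed[OF v] by blast
  have cl: "set (map (evP G v) xs) \<subseteq> carrier G" for xs using evP_closed v by auto
  have e1: "evP G v (Comm a (Ltr y), []) = gcomm G (fc_eval G v a) (v y)" by (simp add: evP_def)
  show ?case using y A Y
    by (simp add: gl_append[OF cl cl] Cons prod_conjPL[OF v] gl_Cons e1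
        comm_right glist_prod_def[of G "[]"])
qed

lemma prod_DL: assumes v: "range v \<subseteq> carrier G"
  shows "glist_prod G (map (evP G v) (DL xs ys)) = gcomm G (glist_prod G (map v xs)) (glist_prod G (map v ys))"
proof (induction xs)
  case Nil
  have Y: "glist_prod G (map v ys) \<in> carrier G" using gl_map_closed[OF v] by blast
  then show ?case by (simp add: glist_prod_def gcomm_def m_assoc)
next
  case (Cons x xs)
  have x: "v x \<in> carrier G" using v by auto
  have X: "glist_prod G (map v xs) \<in> carrier G" using gl_map_closed[OF v] by blast
  have Y: "glist_prod G (map v ys) \<in> carrier G" using gl_map_closed[OF v] by blast
  have cl: "set (map (evP G v) xs) \<subseteq> carrier G" for xs using evP_closed v by auto
  show ?case using x X Y
    by (simp add: gl_append[OF cl cl] Cons prod_conjPL[OF v] prod_CL[OF v] gl_Cons comm_left)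
qed

end


lemma set_stepP_eq: "set (stepP z ps) = set ps \<union> (\<lambda>(e,ws). (e, ws@[z])) ` set ps"
  by (induction ps) (auto simp: stepP_def)

lemma set_stepP: "(e,ws) \<in> set (stepP z ps) \<Longrightarrow> (e,ws) \<in> set ps \<or> (\<exists>ws0. (e,ws0) \<in> set ps \<and> ws = ws0 @ [z])"
  unfolding set_stepP_eq by auto

lemma set_stepP_sup: "p \<in> set ps \<Longrightarrow> p \<in> set (stepP z ps)"
  unfolding set_stepP_eq by auto

lemma set_conjPL_sup: "p \<in> set ps \<Longrightarrow> p \<in> set (conjPL zs ps)"
  by (induction zs arbitrary: ps) (auto simp: set_stepP_sup)

lemma set_conjPL: "(e,ws) \<in> set (conjPL zs ps) \<Longrightarrow>
   \<exists>ws0 ws1. (e,ws0) \<in> set ps \<and> ws = ws0 @ ws1 \<and> set ws1 \<subseteq> set zs"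
proof (induction zs arbitrary: ps ws)
  case Nil then show ?case by force
next
  case (Cons z zs)
  have "(e,ws) \<in> set (conjPL zs (stepP z ps))" using Cons.prems by simp
  from Cons.IH[OF this] obtain ws0 ws1 where a: "(e,ws0) \<in> set (stepP z ps)" "ws = ws0 @ ws1" "set ws1 \<subseteq> set zs"
    by blast
  from set_stepP[OF a(1)] show ?case
  proof
    assume "(e,ws0) \<in> set ps" then show ?case using a by auto
  next
    assume "\<exists>ws2. (e,ws2) \<in> set ps \<and> ws0 = ws2 @ [z]"
    then obtain ws2 where "(e,ws2) \<in> set ps" "ws0 = ws2 @ [z]" by blast
    then show ?case using a by (intro exI[of _ ws2] exI[of _ "z # ws1"]) auto
  qed
qed

lemma distinct_stepP: "distinct ps \<Longrightarrow> (\<forall>(e,ws)\<in>set ps. z \<notin> set ws) \<Longrightarrow> distinct (stepP z ps)"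
proof (induction ps)
  case Nil then show ?case by simp
next
  case (Cons p ps)
  obtain e ws where p: "p = (e,ws)" by fastforce
  have d: "distinct (stepP z ps)" using Cons by auto
  have n1: "(e,ws) \<notin> set (stepP z ps)"
  proof
    assume "(e,ws) \<in> set (stepP z ps)"
    from set_stepP[OF this] Cons.prems p show False by auto
  qed
  have n2: "(e,ws@[z]) \<notin> set (stepP z ps)"
  proof
    assume "(e,ws@[z]) \<in> set (stepP z ps)"
    from set_stepP[OF this] Cons.prems p show False by fastforce
  qed
  show ?case using d n1 n2 p by auto
qed

lemma distinct_conjPL: "distinct ps \<Longrightarrow> distinct zs \<Longrightarrow> (\<forall>(e,ws)\<in>set ps. set ws \<inter> set zs = {})
   \<Longrightarrow> distinct (conjPL zs ps)"
proof (induction zs arbitrary: ps)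
  case Nil then show ?case by simp
next
  case (Cons z zs)
  have d: "distinct (stepP z ps)" using Cons.prems by (intro distinct_stepP) auto
  have "\<forall>(e,ws)\<in>set (stepP z ps). set ws \<inter> set zs = {}"
  proof (clarify)
    fix e ws assume "(e,ws) \<in> set (stepP z ps)"
    from set_stepP[OF this] Cons.prems show "set ws \<inter> set zs = {}" by fastforce
  qed
  then show ?case using Cons d by simp
qed

lemma set_CL: "(e,ws) \<in> set (CL a ys) \<Longrightarrow> \<exists>y\<in>set ys. e = Comm a (Ltr y) \<and> set ws \<subseteq> set ys"
proof (induction ys)
  case Nil then show ?case by simp
next
  case (Cons y ys)
  show ?case
  proof (cases "(e,ws) \<in> set (CL a ys)")
    case True then show ?thesis using Cons by auto
  next
    case False
    then have "(e,ws) \<in> set (conjPL ys [(Comm a (Ltr y), [])])" using Cons by auto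
    from set_conjPL[OF this] show ?thesis by auto
  qed
qed

lemma base_CL: "y \<in> set ys \<Longrightarrow> (Comm a (Ltr y), []) \<in> set (CL a ys)"
  by (induction ys) (auto intro: set_conjPL_sup)

lemma distinct_CL: "distinct ys \<Longrightarrow> distinct (CL a ys)"
proof (induction ys)
  case Nil then show ?case by simp
next
  case (Cons y ys)
  have d2: "distinct (conjPL ys [(Comm a (Ltr y), [])])"
    using Cons.prems by (intro distinct_conjPL) auto
  have dj: "set (CL a ys) \<inter> set (conjPL ys [(Comm a (Ltr y), [])]) = {}"
  proof (rule ccontr)
    assume "\<not> ?thesis"
    then obtain e ws where "(e,ws) \<in> set (CL a ys)" "(e,ws) \<in> set (conjPL ys [(Comm a (Ltr y), [])])"
      by auto
    from set_CL[OF this(1)] set_conjPL[OF this(2)] Cons.prems show False by auto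
  qed
  show ?case using Cons d2 dj by auto
qed

lemma set_DL: "(e,ws) \<in> set (DL xs ys) \<Longrightarrow>
   \<exists>x\<in>set xs. \<exists>y\<in>set ys. e = Comm (Ltr x) (Ltr y) \<and> set ws \<subseteq> set xs \<union> set ys"
proof (induction xs)
  case Nil then show ?case by simp
next
  case (Cons x xs)
  show ?case
  proof (cases "(e,ws) \<in> set (DL xs ys)")
    case True then show ?thesis using Cons by auto
  next
    case False
    then have "(e,ws) \<in> set (conjPL xs (CL (Ltr x) ys))" using Cons by auto
    from set_conjPL[OF this] obtain ws0 ws1 where
      a: "(e,ws0) \<in> set (CL (Ltr x) ys)" "ws = ws0 @ ws1" "set ws1 \<subseteq> set xs" by blast
    from set_CL[OF a(1)] a(2,3) show ?thesis by auto
  qed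
qed

lemma base_DL: "x \<in> set xs \<Longrightarrow> y \<in> set ys \<Longrightarrow> (Comm (Ltr x) (Ltr y), []) \<in> set (DL xs ys)"
  by (induction xs) (auto intro: set_conjPL_sup base_CL)

lemma distinct_DL: "distinct xs \<Longrightarrow> distinct ys \<Longrightarrow> set xs \<inter> set ys = {} \<Longrightarrow> distinct (DL xs ys)"
proof (induction xs)
  case Nil then show ?case by simp
next
  case (Cons x xs)
  have d2: "distinct (conjPL xs (CL (Ltr x) ys))"
  proof (rule distinct_conjPL)
    show "distinct (CL (Ltr x) ys)" using Cons.prems by (simp add: distinct_CL)
    show "distinct xs" using Cons.prems by simp
    show "\<forall>(e,ws)\<in>set (CL (Ltr x) ys). set ws \<inter> set xs = {}"
      using Cons.prems set_CL by fastforce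
  qed
  have dj: "set (conjPL xs (CL (Ltr x) ys)) \<inter> set (DL xs ys) = {}"
  proof (rule ccontr)
    assume "\<not> ?thesis"
    then obtain e ws where 1: "(e,ws) \<in> set (conjPL xs (CL (Ltr x) ys))" and 2: "(e,ws) \<in> set (DL xs ys)"
      by auto
    from set_conjPL[OF 1] obtain ws0 where "(e,ws0) \<in> set (CL (Ltr x) ys)" by blast
    from set_CL[OF this] set_DL[OF 2] Cons.prems show False by auto
  qed
  show ?case using Cons d2 dj by auto
qed

lemma args_lnorm: "fc_args (lnorm e ws) = fc_args e \<union> set ws"
  by (induction ws rule: rev_induct) auto

lemma weight_lnorm: "fc_weight (lnorm e ws) = fc_weight e + length ws"
  by (induction ws rule: rev_induct) auto

lemma lnorm_inj: "lnorm e ws = lnorm e' ws' \<Longrightarrow> fc_weight e = fc_weight e' \<Longrightarrow> e = e' \<and> ws = ws'"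
proof (induction ws arbitrary: ws' rule: rev_induct)
  case Nil
  then have "length ws' = 0" using weight_lnorm[of e' ws'] by simp
  then show ?case using Nil by simp
next
  case (snoc z ws)
  then have "length ws' = Suc (length ws)" using weight_lnorm[of e' ws'] weight_lnorm[of e "ws@[z]"] by simp
  then obtain ws0 z' where "ws' = ws0 @ [z']" by (cases ws' rule: rev_exhaust) auto
  then show ?case using snoc by auto
qed

definition goodc :: "letter fcomm \<Rightarrow> bool" where
  "goodc e \<longleftrightarrow> (\<forall>a b. Comm (Ltr a) (Ltr b) \<in> fc_components e \<longrightarrow> (\<exists>i j. a = XL i \<and> b = YL j))
     \<and> (\<forall>l. e \<noteq> Ltr l)"

lemma goodc_lnorm: "goodc e \<Longrightarrow> goodc (lnorm e ws)"
proof (induction ws rule: rev_induct)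
  case Nil then show ?case by simp
next
  case (snoc z ws)
  then have g: "goodc (lnorm e ws)" by simp
  then have "\<forall>l. lnorm e ws \<noteq> Ltr l" unfolding goodc_def by blast
  with g show ?case unfolding goodc_def by auto (metis)+
qed

lemma fc_eval_cong: "(\<forall>l\<in>fc_args e. v l = w l) \<Longrightarrow> fc_eval G v e = fc_eval G w e"
  by (induction e) auto

theorem lemmaB5:
  fixes G :: "('a, 'b) monoid_scheme" and m n :: nat and x y :: "nat \<Rightarrow> 'a"
  assumes "nilpotent_group G"
    and "\<And>i. i < m \<Longrightarrow> x i \<in> carrier G"
    and "\<And>j. j < n \<Longrightarrow> y j \<in> carrier G"
  shows "\<exists>etas :: letter fcomm list.
     (\<forall>e\<in>set etas. fc_args e \<subseteq> xy_letters m n)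
   \<and> gcomm G (glist_prod G (map x [0..<m])) (glist_prod G (map y [0..<n]))
       = glist_prod G (map (fc_eval G (xy_val x y)) etas)
   \<and> (\<forall>i<m. \<forall>j<n. Comm (Ltr (XL i)) (Ltr (YL j)) \<in> set etas)
   \<and> (\<forall>e\<in>set etas. (\<exists>i. XL i \<in> fc_args e) \<and> (\<exists>j. YL j \<in> fc_args e))
   \<and> distinct etas
   \<and> (\<forall>e\<in>set etas. \<forall>i i'. Comm (Ltr (XL i)) (Ltr (XL i')) \<notin> fc_components e
                        \<and> Comm (Ltr (YL i)) (Ltr (YL i')) \<notin> fc_components e)
   \<and> (\<forall>e\<in>set etas. (\<nexists>i j. e = Comm (Ltr (XL i)) (Ltr (YL j))) \<longrightarrow> fc_weight e > 2)"
proof -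
  have grp: "group G" using assms(1) by (simp add: nilpotent_group_def)
  define xs where "xs = map XL [0..<m]"
  define ys where "ys = map YL [0..<n]"
  define L where "L = xy_letters m n"
  define v where "v = (\<lambda>l. if l \<in> L then xy_val x y l else \<one>\<^bsub>G\<^esub>)"
  define f where "f = (\<lambda>p :: letter fcomm \<times> letter list. lnorm (fst p) (snd p))"
  define etas where "etas = map f (DL xs ys)"
  have vr: "range v \<subseteq> carrier G"
    using assms(2,3) group.is_monoid[OF grp]
    by (auto simp: v_def L_def xy_letters_def monoid.one_closed)
  have setxs: "set xs = XL ` {..<m}" by (auto simp: xs_def)
  have setys: "set ys = YL ` {..<n}" by (auto simp: ys_def)
  have XY: "set xs \<union> set ys = L" by (simp add: setxs setys L_def xy_letters_def)
  have memb: "\<exists>i<m. \<exists>j<n. e = Comm (Ltr (XL i)) (Ltr (YL j)) \<and> set ws \<subseteq> L"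
    if "(e,ws) \<in> set (DL xs ys)" for e ws
    using set_DL[OF that] XY setxs setys by auto
  have P1: "\<forall>e\<in>set etas. fc_args e \<subseteq> L"
  proof
    fix e assume "e \<in> set etas"
    then obtain b ws where "(b,ws) \<in> set (DL xs ys)" "e = lnorm b ws"
      by (auto simp: etas_def f_def)
    with memb[OF this(1)] show "fc_args e \<subseteq> L"
      by (auto simp: args_lnorm L_def xy_letters_def)
  qed
  have P2: "gcomm G (glist_prod G (map x [0..<m])) (glist_prod G (map y [0..<n]))
       = glist_prod G (map (fc_eval G (xy_val x y)) etas)"
  proof -
    have "map x [0..<m] = map v xs" by (auto simp: xs_def v_def L_def xy_letters_def)
    moreover have "map y [0..<n] = map v ys" by (auto simp: ys_def v_def L_def xy_letters_def)
    moreover have "map (fc_eval G (xy_val x y)) etas = map (evP G v) (DL xs ys)"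
      unfolding etas_def map_map
    proof (rule map_cong[OF refl])
      fix p assume p: "p \<in> set (DL xs ys)"
      have "fc_args (f p) \<subseteq> L" using P1 p by (auto simp: etas_def)
      then show "(fc_eval G (xy_val x y) \<circ> f) p = evP G v p"
        by (auto simp: evP_def f_def v_def intro!: fc_eval_cong)
    qed
    ultimately show ?thesis using group.prod_DL[OF grp vr] by simp
  qed
  have P3: "\<forall>i<m. \<forall>j<n. Comm (Ltr (XL i)) (Ltr (YL j)) \<in> set etas"
  proof (intro allI impI)
    fix i j assume "i < m" "j < n"
    then have "(Comm (Ltr (XL i)) (Ltr (YL j)), []) \<in> set (DL xs ys)"
      by (intro base_DL) (auto simp: setxs setys)
    then show "Comm (Ltr (XL i)) (Ltr (YL j)) \<in> set etas"
      unfolding etas_def f_def by force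
  qed
  have form: "\<exists>i j ws. e = lnorm (Comm (Ltr (XL i)) (Ltr (YL j))) ws" if "e \<in> set etas" for e
    using that memb unfolding etas_def f_def by fastforce
  have P4: "\<forall>e\<in>set etas. (\<exists>i. XL i \<in> fc_args e) \<and> (\<exists>j. YL j \<in> fc_args e)"
    using form by (fastforce simp: args_lnorm)
  have P5: "distinct etas"
    unfolding etas_def
  proof (rule distinct_map[THEN iffD2], rule conjI)
    show "distinct (DL xs ys)" by (rule distinct_DL) (auto simp: xs_def ys_def distinct_map inj_on_def)
    show "inj_on f (set (DL xs ys))"
    proof (rule inj_onI)
      fix p q assume "p \<in> set (DL xs ys)" "q \<in> set (DL xs ys)" "f p = f q"
      then show "p = q" using memb unfolding f_def
        by (metis (no_types, lifting) fc_weight.simps lnorm_inj prod.collapse)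
    qed
  qed
  have P6: "\<forall>e\<in>set etas. \<forall>i i'. Comm (Ltr (XL i)) (Ltr (XL i')) \<notin> fc_components e
                        \<and> Comm (Ltr (YL i)) (Ltr (YL i')) \<notin> fc_components e"
  proof (intro ballI allI)
    fix e i i' assume "e \<in> set etas"
    then obtain a b ws where e: "e = lnorm (Comm (Ltr (XL a)) (Ltr (YL b))) ws" using form by blast
    have "goodc (Comm (Ltr (XL a)) (Ltr (YL b)))" by (auto simp: goodc_def)
    then have "goodc e" unfolding e by (rule goodc_lnorm)
    then show "Comm (Ltr (XL i)) (Ltr (XL i')) \<notin> fc_components e
                        \<and> Comm (Ltr (YL i)) (Ltr (YL i')) \<notin> fc_components e"
      unfolding goodc_def by blast
  qed
  have P7: "\<forall>e\<in>set etas. (\<nexists>i j. e = Comm (Ltr (XL i)) (Ltr (YL j))) \<longrightarrow> fc_weight e > 2"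
  proof (intro ballI impI)
    fix e assume "e \<in> set etas" and nb: "\<nexists>i j. e = Comm (Ltr (XL i)) (Ltr (YL j))"
    then obtain a b ws where e: "e = lnorm (Comm (Ltr (XL a)) (Ltr (YL b))) ws" using form by blast
    then have "ws \<noteq> []" using nb by auto
    then show "fc_weight e > 2" by (simp add: e weight_lnorm)
  qed
  show ?thesis using P1 P2 P3 P4 P5 P6 P7 unfolding L_def by blast
qed

end
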